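(* Let $\theta\in\mathbb{R}$ and let $$g=\begin{pmatrix} e^{\mathbf i\theta} & 0\\ 0 & e^{-\mathbf i\theta}\end{pmatrix},\qquad h=\begin{pmatrix} a & b\\ c & d\end{pmatrix}\in SL(2,\mathbb{C}).$$ If $\langle g,h\rangle$ is discrete and non-elementary, then $$\inf_{t\in\mathbb{C},\ |t|<1} 4f(t)\sin^2\theta\ \ge 1,$$ where $$f(t)=\frac{|1-t^2|^2(|a|^2+|d|^2)+|1+t|^4|c|^2+|1-t|^4|b|^2+2(\bar t-t)^2}{4(1-|t|^2)^2}+\frac12 .$$
   Context: $SL(2,\mathbb{C})$ acts as the group of (orientation preserving) isometries of hyperbolic $3$-space / Möbius transformations; a subgroup is non-elementary in the usual sense of Kleinian groups. Here $\mathbf i=\sqrt{-1}$. *)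

theory Defs
  imports "HOL-Analysis.Analysis"
begin

type_synonym cmat2 = "complex^2^2"

definition mk2 :: "complex \<Rightarrow> complex \<Rightarrow> complex \<Rightarrow> complex \<Rightarrow> cmat2" where
  "mk2 a b c d = (\<chi> i j. if i = 1 then (if j = 1 then a else b) else (if j = 1 then c else d))"

definition SL2C :: "cmat2 set" where
  "SL2C = {A. det A = 1}"

inductive_set gen_group :: "cmat2 set \<Rightarrow> cmat2 set" for S where
  gen_one: "mat 1 \<in> gen_group S"
| gen_base: "A \<in> S \<Longrightarrow> A \<in> gen_group S"
| gen_mult: "A \<in> gen_group S \<Longrightarrow> B \<in> gen_group S \<Longrightarrow> A ** B \<in> gen_group S"
| gen_inv: "A \<in> gen_group S \<Longrightarrow> matrix_inv A \<in> gen_group S"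

definition discrete_group :: "cmat2 set \<Rightarrow> bool" where
  "discrete_group G \<longleftrightarrow> (\<exists>e>0. \<forall>A\<in>G. norm (A - mat 1) < e \<longrightarrow> A = mat 1)"

text \<open>Points of closed hyperbolic 3-space (upper half-space model):
  Pt z t with t > 0 is the point z + t j of H^3; Pt z 0 is the boundary point z;
  Inf is the boundary point infinity.\<close>
datatype hpoint = Inf | Pt complex real

definition closed_H3 :: "hpoint set" where
  "closed_H3 = {Inf} \<union> {Pt z t | z t. t \<ge> 0}"

text \<open>Poincare extension of the Moebius action of a matrix.\<close>
fun act :: "cmat2 \<Rightarrow> hpoint \<Rightarrow> hpoint" where
  "act A Inf = (let a = A$1$1; c = A$2$1 in if c = 0 then Inf else Pt (a / c) 0)"
| "act A (Pt z t) =
     (let a = A$1$1; b = A$1$2; c = A$2$1; d = A$2$2;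
          D = (cmod (c * z + d))\<^sup>2 + (cmod c)\<^sup>2 * t\<^sup>2
      in if D = 0 then Inf
         else Pt (((a * z + b) * cnj (c * z + d) + a * cnj c * complex_of_real (t\<^sup>2)) / complex_of_real D)
                 (t / D))"

definition elementary :: "cmat2 set \<Rightarrow> bool" where
  "elementary G \<longleftrightarrow> (\<exists>x\<in>closed_H3. finite ((\<lambda>A. act A x) ` G))"

definition fthm :: "complex \<Rightarrow> complex \<Rightarrow> complex \<Rightarrow> complex \<Rightarrow> complex \<Rightarrow> real" where
  "fthm a b c d t =
     ((cmod (1 - t\<^sup>2))\<^sup>2 * ((cmod a)\<^sup>2 + (cmod d)\<^sup>2) + (cmod (1 + t))^4 * (cmod c)\<^sup>2
       + (cmod (1 - t))^4 * (cmod b)\<^sup>2 + 2 * Re ((cnj t - t)\<^sup>2))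
     / (4 * (1 - (cmod t)\<^sup>2)\<^sup>2) + 1/2"

end

theory Submission
  imports Defs
begin


lemma mk2_nth[simp]:
  "mk2 a b c d $ 1 $ 1 = a" "mk2 a b c d $ 1 $ 2 = b"
  "mk2 a b c d $ 2 $ 1 = c" "mk2 a b c d $ 2 $ 2 = d"
  by (simp_all add: mk2_def)

lemma mk2_eq_iff: "mk2 a b c d = mk2 a' b' c' d' \<longleftrightarrow> a = a' \<and> b = b' \<and> c = c' \<and> d = d'"
  by (metis mk2_nth)

lemma mk2_ext: "A = mk2 (A$1$1) (A$1$2) (A$2$1) (A$2$2)"
  by (simp add: vec_eq_iff forall_2)

lemma mk2_mult: "mk2 a b c d ** mk2 a' b' c' d' =
   mk2 (a*a' + b*c') (a*b' + b*d') (c*a' + d*c') (c*b' + d*d')"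
  by (simp add: vec_eq_iff forall_2 matrix_matrix_mult_def sum_2)

lemma mat1_mk2: "mat 1 = mk2 1 0 0 1"
  by (simp add: vec_eq_iff forall_2 mat_def)

lemma det_mk2: "det (mk2 a b c d) = a*d - b*c"
  by (simp add: det_2)

lemma matrix_inv_eq:
  fixes A B :: cmat2
  assumes "A ** B = mat 1" "B ** A = mat 1"
  shows "matrix_inv A = B"
proof -
  have ex: "\<exists>A'::cmat2. A ** A' = mat 1 \<and> A' ** A = mat 1" using assms by blast
  let ?C = "matrix_inv A"
  have C: "A ** ?C = mat 1 \<and> ?C ** A = mat 1"
    unfolding matrix_inv_def by (rule someI_ex[OF ex])
  have "?C = ?C ** (A ** B)" using assms by simp
  also have "\<dots> = (?C ** A) ** B" by (simp add: matrix_mul_assoc)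
  also have "\<dots> = B" using C by simp
  finally show ?thesis .
qed

lemma matrix_inv_mk2:
  assumes "a*d - b*c = \<delta>" "\<delta> \<noteq> 0"
  shows "matrix_inv (mk2 a b c d) = mk2 (d/\<delta>) (-b/\<delta>) (-c/\<delta>) (a/\<delta>)"
  apply (rule matrix_inv_eq)
  using assms by (auto simp: mk2_mult mat1_mk2 mk2_eq_iff field_simps)

lemma norm_mk2: "norm (mk2 a b c d) = sqrt ((cmod a)^2 + (cmod b)^2 + (cmod c)^2 + (cmod d)^2)"
  by (simp add: norm_vec_def L2_set_def sum_2 add.assoc)

lemma gen_group_inv_induct:
  assumes "A \<in> gen_group S" "Q (mat 1)" "\<And>A. A \<in> S \<Longrightarrow> Q A"
    "\<And>A B. Q A \<Longrightarrow> Q B \<Longrightarrow> Q (A ** B)" "\<And>A. Q A \<Longrightarrow> Q (matrix_inv A)"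
  shows "Q A"
  using assms(1) by (induct rule: gen_group.induct) (use assms in auto)



definition nsq :: "complex \<Rightarrow> real" where "nsq z = (cmod z)^2"

lemma nsq_c: "complex_of_real (nsq z) = z * cnj z"
  unfolding nsq_def by (rule complex_norm_square)

lemma nsq_ge0[simp]: "0 \<le> nsq z" by (simp add: nsq_def)

lemma cnj_det: "a*d - b*c = 1 \<Longrightarrow> cnj a * cnj d - cnj b * cnj c = 1"
  by (metis complex_cnj_diff complex_cnj_mult complex_cnj_one)

lemma id_S:
  assumes "a*d - b*c = 1" "l * cnj l = 1"
  shows "nsq (a*d*l - b*c*cnj l) + nsq (a*b*(cnj l - l)) + nsq (c*d*(l - cnj l)) + nsq (a*d*cnj l - b*c*l) - 2
     = nsq (l - cnj l) * ((nsq a + nsq c) * (nsq b + nsq d) - 1)"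
proof -
  have h2: "cnj a * cnj d - cnj b * cnj c = 1" using assms(1) by (rule cnj_det)
  have "complex_of_real (nsq (a*d*l - b*c*cnj l) + nsq (a*b*(cnj l - l)) + nsq (c*d*(l - cnj l)) + nsq (a*d*cnj l - b*c*l) - 2)
     = complex_of_real (nsq (l - cnj l) * ((nsq a + nsq c) * (nsq b + nsq d) - 1))"
    unfolding of_real_add of_real_diff of_real_mult nsq_c
    using assms(1) assms(2) h2 by simp algebra
  then show ?thesis by (simp only: of_real_eq_iff)
qed

lemma id_E:
  assumes "a*d - b*c = 1" "l * cnj l = 1"
  shows "nsq (a*d*l - b*c*cnj l - l) + nsq (a*b*(cnj l - l)) + nsq (c*d*(l - cnj l)) + nsq (a*d*cnj l - b*c*l - cnj l)
     = nsq (a*d*l - b*c*cnj l) + nsq (a*b*(cnj l - l)) + nsq (c*d*(l - cnj l)) + nsq (a*d*cnj l - b*c*l) - 2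
       - nsq (l - cnj l) * (2 * Re (b*c))"
proof -
  have h2: "cnj a * cnj d - cnj b * cnj c = 1" using assms(1) by (rule cnj_det)
  have re: "complex_of_real (nsq (l - cnj l) * (2 * Re (b*c))) = (l - cnj l) * cnj (l - cnj l) * (b*c + cnj b * cnj c)"
    using complex_add_cnj[of "b*c"] by (simp add: nsq_c)
  have "complex_of_real (nsq (a*d*l - b*c*cnj l - l) + nsq (a*b*(cnj l - l)) + nsq (c*d*(l - cnj l)) + nsq (a*d*cnj l - b*c*l - cnj l))
     = complex_of_real (nsq (a*d*l - b*c*cnj l) + nsq (a*b*(cnj l - l)) + nsq (c*d*(l - cnj l)) + nsq (a*d*cnj l - b*c*l) - 2)
       - complex_of_real (nsq (l - cnj l) * (2 * Re (b*c)))"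
    unfolding re
    unfolding of_real_add of_real_diff nsq_c
    using assms(1) assms(2) h2 by (simp only: complex_cnj_mult complex_cnj_diff complex_cnj_cnj complex_cnj_add complex_cnj_one of_real_numeral) algebra
  then show ?thesis by (simp only: of_real_eq_iff of_real_diff[symmetric])
qed

lemma id_det:
  assumes "a*d - b*c = 1" "l * cnj l = 1"
  shows "(a*d*l - b*c*cnj l) * (a*d*cnj l - b*c*l) - (a*b*(cnj l - l)) * (c*d*(l - cnj l)) = 1"
proof -
  have "(a*d - b*c)^2 = 1" using assms by simp
  then show ?thesis using assms(2) by algebra
qed

lemma id_beta:
  assumes "a*d - b*c = 1"
  shows "(a*b*(cnj l - l)) * (c*d*(l - cnj l)) = complex_of_real (nsq (l - cnj l)) * (b*c) * (1 + b*c)"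
  unfolding nsq_c using assms by (simp add: algebra_simps) algebra

lemma amgm: "cmod x * cmod y \<le> (nsq x + nsq y) / 2"
proof -
  have "0 \<le> (cmod x - cmod y)^2" by simp
  then show ?thesis unfolding nsq_def by (simp add: power2_eq_square algebra_simps)
qed

lemma S_ge2:
  assumes "a*d - b*c = 1"
  shows "2 \<le> nsq a + nsq b + nsq c + nsq d"
proof -
  have "1 = cmod (a*d - b*c)" using assms by simp
  also have "\<dots> \<le> cmod (a*d) + cmod (b*c)" by (rule norm_triangle_ineq4)
  also have "\<dots> \<le> (nsq a + nsq d)/2 + (nsq b + nsq c)/2"
    using amgm[of a d] amgm[of b c] by (auto simp: norm_mult field_simps)
  finally show ?thesis by (simp add: field_simps)
qed

definition jstep :: "complex \<Rightarrow> complex \<times> complex \<times> complex \<times> complex \<Rightarrow> complex \<times> complex \<times> complex \<times> complex" where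
  "jstep l x = (case x of (a,b,c,d) \<Rightarrow>
     (a*d*l - b*c*cnj l, a*b*(cnj l - l), c*d*(l - cnj l), a*d*cnj l - b*c*l))"

primrec js :: "complex \<Rightarrow> complex \<times> complex \<times> complex \<times> complex \<Rightarrow> nat \<Rightarrow> complex \<times> complex \<times> complex \<times> complex" where
  "js l x 0 = x"
| "js l x (Suc n) = jstep l (js l x n)"

definition "jA l x n = fst (js l x n)"
definition "jB l x n = fst (snd (js l x n))"
definition "jC l x n = fst (snd (snd (js l x n)))"
definition "jD l x n = snd (snd (snd (js l x n)))"

lemma j0: "jA l (a,b,c,d) 0 = a" "jB l (a,b,c,d) 0 = b" "jC l (a,b,c,d) 0 = c" "jD l (a,b,c,d) 0 = d"
  by (simp_all add: jA_def jB_def jC_def jD_def)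

lemma jSuc:
  "jA l x (Suc n) = jA l x n * jD l x n * l - jB l x n * jC l x n * cnj l"
  "jB l x (Suc n) = jA l x n * jB l x n * (cnj l - l)"
  "jC l x (Suc n) = jC l x n * jD l x n * (l - cnj l)"
  "jD l x (Suc n) = jA l x n * jD l x n * cnj l - jB l x n * jC l x n * l"
  by (simp_all add: jA_def jB_def jC_def jD_def jstep_def split: prod.splits)

lemma jdet:
  assumes "a*d - b*c = 1" "l * cnj l = 1"
  shows "jA l (a,b,c,d) n * jD l (a,b,c,d) n - jB l (a,b,c,d) n * jC l (a,b,c,d) n = 1"
  by (induct n) (simp_all add: j0 jSuc id_det assms)



lemma jconv:
  assumes det: "a*d - b*c = 1" and ll: "l * cnj l = 1"
    and r1: "nsq (l - cnj l) * (nsq a + nsq b + nsq c + nsq d + 2) / 4 < 1"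
    and eps: "\<epsilon> > 0"
  shows "\<exists>n. nsq (jA l (a,b,c,d) n - l) + nsq (jB l (a,b,c,d) n) + nsq (jC l (a,b,c,d) n)
              + nsq (jD l (a,b,c,d) n - cnj l) < \<epsilon>"
proof -
  define x where "x = (a,b,c,d)"
  define A where "A = jA l x" define B where "B = jB l x"
  define C where "C = jC l x" define D where "D = jD l x"
  define S where "S n = nsq (A n) + nsq (B n) + nsq (C n) + nsq (D n)" for n
  define s where "s = nsq (l - cnj l)"
  define r where "r = s * (S 0 + 2) / 4"
  define \<beta> where "\<beta> n = B n * C n" for n
  have dn: "A n * D n - B n * C n = 1" for n
    unfolding A_def B_def C_def D_def x_def using jdet[OF det ll] .
  have suc: "A (Suc n) = A n * D n * l - B n * C n * cnj l"
     "B (Suc n) = A n * B n * (cnj l - l)"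
     "C (Suc n) = C n * D n * (l - cnj l)"
     "D (Suc n) = A n * D n * cnj l - B n * C n * l" for n
    unfolding A_def B_def C_def D_def by (simp_all add: jSuc)
  have S0: "S 0 = nsq a + nsq b + nsq c + nsq d"
    unfolding S_def A_def B_def C_def D_def x_def by (simp add: j0)
  have Sge: "2 \<le> S n" for n unfolding S_def using S_ge2[OF dn[of n]] by simp
  have s0: "0 \<le> s" unfolding s_def by simp
  have r0: "0 \<le> r" unfolding r_def using s0 Sge[of 0] by simp
  have rl: "r < 1" unfolding r_def s_def using r1 S0 by simp
  have sl: "s < 1"
  proof -
    have "s * 4 / 4 \<le> r" unfolding r_def using s0 Sge[of 0] by (intro divide_right_mono mult_left_mono) auto
    then show ?thesis using rl by simp
  qed
  have Sstep: "S (Suc n) - 2 \<le> s * (S n - 2) * (S n + 2) / 4" for n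
  proof -
    have e: "S (Suc n) - 2 = s * ((nsq (A n) + nsq (C n)) * (nsq (B n) + nsq (D n)) - 1)"
      unfolding S_def suc s_def using id_S[OF dn[of n] ll] by simp
    have "(nsq (A n) + nsq (C n)) * (nsq (B n) + nsq (D n)) \<le> (S n)^2 / 4"
    proof -
      have "0 \<le> ((nsq (A n) + nsq (C n)) - (nsq (B n) + nsq (D n)))^2" by simp
      then show ?thesis unfolding S_def by (simp add: power2_eq_square algebra_simps)
    qed
    then have "s * ((nsq (A n) + nsq (C n)) * (nsq (B n) + nsq (D n)) - 1) \<le> s * ((S n)^2/4 - 1)"
      using s0 by (intro mult_left_mono) auto
    also have "\<dots> = s * (S n - 2) * (S n + 2) / 4" by (simp add: power2_eq_square algebra_simps)
    finally show ?thesis using e by simp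
  qed
  have geo: "S n - 2 \<le> r^n * (S 0 - 2)" for n
  proof (induct n)
    case 0 then show ?case by simp
  next
    case (Suc n)
    have "r^n \<le> 1" using r0 rl by (simp add: power_le_one)
    then have "r^n * (S 0 - 2) \<le> S 0 - 2" using Sge[of 0] by (metis diff_ge_0_iff_ge mult_left_le_one_le r0 zero_le_power)
    then have Sn: "S n \<le> S 0" using Suc by simp
    have "S (Suc n) - 2 \<le> s * (S n - 2) * (S n + 2) / 4" by (rule Sstep)
    also have "\<dots> \<le> s * (S n - 2) * (S 0 + 2) / 4"
      using s0 Sge[of n] Sn by (intro divide_right_mono mult_left_mono) auto
    also have "\<dots> = r * (S n - 2)" unfolding r_def by simp
    also have "\<dots> \<le> r * (r^n * (S 0 - 2))" using Suc r0 by (intro mult_left_mono) auto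
    finally show ?case by simp
  qed
  have bstep: "cmod (\<beta> (Suc n)) \<le> s * cmod (\<beta> n) * (S n / 2)" for n
  proof -
    have "\<beta> (Suc n) = complex_of_real s * (\<beta> n) * (1 + \<beta> n)"
      unfolding \<beta>_def suc s_def using id_beta[OF dn[of n]] by simp
    moreover have "1 + \<beta> n = A n * D n" using dn[of n] unfolding \<beta>_def by (simp add: algebra_simps)
    ultimately have "cmod (\<beta> (Suc n)) = s * cmod (\<beta> n) * (cmod (A n) * cmod (D n))"
      using s0 by (simp add: norm_mult)
    also have "\<dots> \<le> s * cmod (\<beta> n) * (S n / 2)"
    proof -
      have "(nsq (A n) + nsq (D n)) / 2 \<le> S n / 2" unfolding S_def
        using nsq_ge0[of "B n"] nsq_ge0[of "C n"] by (intro divide_right_mono) auto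
      then have "cmod (A n) * cmod (D n) \<le> S n / 2" using amgm[of "A n" "D n"] by linarith
      then show ?thesis using s0 by (intro mult_left_mono) auto
    qed
    finally show ?thesis .
  qed
  have Estep: "nsq (A (Suc n) - l) + nsq (B (Suc n)) + nsq (C (Suc n)) + nsq (D (Suc n) - cnj l)
      \<le> (S (Suc n) - 2) + 2 * s * cmod (\<beta> n)" for n
  proof -
    have e: "nsq (A (Suc n) - l) + nsq (B (Suc n)) + nsq (C (Suc n)) + nsq (D (Suc n) - cnj l)
       = S (Suc n) - 2 - s * (2 * Re (\<beta> n))"
      unfolding S_def suc s_def \<beta>_def using id_E[OF dn[of n] ll] by simp
    have "- Re (\<beta> n) \<le> cmod (\<beta> n)" using abs_Re_le_cmod[of "\<beta> n"] by linarith
    then have "s * (- Re (\<beta> n)) \<le> s * cmod (\<beta> n)" using s0 by (rule mult_left_mono)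
    then have "- (s * (2 * Re (\<beta> n))) \<le> 2 * s * cmod (\<beta> n)" by simp
    then show ?thesis using e by linarith
  qed
  define q where "q = (1 + s) / 2"
  have q0: "0 \<le> q" and ql: "q < 1" unfolding q_def using s0 sl by auto
  obtain N0 where N0: "r^N0 < (1 - s) / (S 0 - 2 + 1)"
  proof (cases "r = 0")
    case True then show ?thesis using that[of 1] sl Sge[of 0] by simp
  next
    case False
    then have "\<exists>n. r^n < (1 - s) / (S 0 - 2 + 1)"
      using real_arch_pow_inv[of "(1 - s) / (S 0 - 2 + 1)" r] sl Sge[of 0] r0 rl by simp
    then show ?thesis using that by blast
  qed
  have smallS: "S n - 2 \<le> 1 - s" if "N0 \<le> n" for n
  proof -
    have "r^n \<le> r^N0" using that r0 rl by (simp add: power_decreasing)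
    have "S n - 2 \<le> r^n * (S 0 - 2)" by (rule geo)
    also have "\<dots> \<le> r^N0 * (S 0 - 2 + 1)"
      using \<open>r^n \<le> r^N0\<close> Sge[of 0] r0 by (intro mult_mono) auto
    also have "\<dots> \<le> 1 - s" using N0 Sge[of 0] by (simp add: pos_less_divide_eq less_imp_le)
    finally show ?thesis .
  qed
  have bq: "cmod (\<beta> (Suc n)) \<le> q * cmod (\<beta> n)" if "N0 \<le> n" for n
  proof -
    have "s * (S n / 2) \<le> q"
    proof -
      have "s * (S n / 2) = s + s * ((S n - 2) / 2)" by (simp add: field_simps)
      also have "\<dots> \<le> s + 1 * ((1 - s) / 2)"
        using smallS[OF that] s0 sl Sge[of n] by (intro add_left_mono mult_mono) auto
      finally show ?thesis unfolding q_def by (simp add: field_simps)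
    qed
    then have "s * (S n / 2) * cmod (\<beta> n) \<le> q * cmod (\<beta> n)"
      by (rule mult_right_mono) simp
    then have "s * cmod (\<beta> n) * (S n / 2) \<le> q * cmod (\<beta> n)"
      by (simp add: mult_ac)
    then show ?thesis using bstep[of n] by linarith
  qed
  have bgeo: "cmod (\<beta> (N0 + m)) \<le> q^m * cmod (\<beta> N0)" for m
  proof (induct m)
    case 0 then show ?case by simp
  next
    case (Suc m)
    have "cmod (\<beta> (N0 + Suc m)) \<le> q * cmod (\<beta> (N0 + m))" using bq[of "N0 + m"] by simp
    also have "\<dots> \<le> q * (q^m * cmod (\<beta> N0))" using Suc q0 by (intro mult_left_mono) auto
    finally show ?case by simp
  qed
  have Ebound: "nsq (A (Suc (N0 + m)) - l) + nsq (B (Suc (N0 + m))) + nsq (C (Suc (N0 + m))) + nsq (D (Suc (N0 + m)) - cnj l)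
      \<le> r^m * (S 0 - 2) + 2 * (q^m * cmod (\<beta> N0))" for m
  proof -
    have "r^(Suc (N0+m)) \<le> r^m" using r0 rl by (intro power_decreasing) auto
    then have a1: "S (Suc (N0 + m)) - 2 \<le> r^m * (S 0 - 2)"
      using geo[of "Suc (N0+m)"] Sge[of 0] by (meson mult_right_mono diff_ge_0_iff_ge order_trans)
    have a2: "2 * s * cmod (\<beta> (N0 + m)) \<le> 2 * (q^m * cmod (\<beta> N0))"
    proof -
      have "s * cmod (\<beta> (N0 + m)) \<le> 1 * (q^m * cmod (\<beta> N0))"
        using bgeo[of m] s0 sl by (intro mult_mono) auto
      then show ?thesis by simp
    qed
    show ?thesis using Estep[of "N0 + m"] a1 a2 by simp
  qed
  have lim: "(\<lambda>m. r^m * (S 0 - 2) + 2 * (q^m * cmod (\<beta> N0))) \<longlonglongrightarrow> 0"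
  proof -
    have "(\<lambda>m. r^m) \<longlonglongrightarrow> 0" using r0 rl by (intro LIMSEQ_power_zero) auto
    moreover have "(\<lambda>m. q^m) \<longlonglongrightarrow> 0" using q0 ql by (intro LIMSEQ_power_zero) auto
    ultimately have "(\<lambda>m. r^m * (S 0 - 2) + 2 * (q^m * cmod (\<beta> N0))) \<longlonglongrightarrow> 0 * (S 0 - 2) + 2 * (0 * cmod (\<beta> N0))"
      by (intro tendsto_add tendsto_mult tendsto_const)
    then show ?thesis by simp
  qed
  then have "eventually (\<lambda>m. r^m * (S 0 - 2) + 2 * (q^m * cmod (\<beta> N0)) < \<epsilon>) sequentially"
    using eps by (rule order_tendstoD)
  then obtain m where "r^m * (S 0 - 2) + 2 * (q^m * cmod (\<beta> N0)) < \<epsilon>"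
    by (auto simp: eventually_sequentially)
  then have "nsq (A (Suc (N0 + m)) - l) + nsq (B (Suc (N0 + m))) + nsq (C (Suc (N0 + m))) + nsq (D (Suc (N0 + m)) - cnj l) < \<epsilon>"
    using Ebound[of m] by linarith
  then show ?thesis unfolding A_def B_def C_def D_def x_def by blast
qed



lemma Inf_in: "Inf \<in> closed_H3" by (simp add: closed_H3_def)
lemma Pt0_in: "Pt z 0 \<in> closed_H3" by (auto simp: closed_H3_def)

lemma mk2_det_mult:
  fixes p q r u p' q' r' u' :: complex
  shows "(p*p' + q*r') * (r*q' + u*u') - (p*q' + q*u') * (r*p' + u*r') = (p*u - q*r) * (p'*u' - q'*r')"
  by algebra

lemma gen_group_mk2_induct:
  fixes A :: cmat2 and S :: "cmat2 set" and P :: "complex \<Rightarrow> complex \<Rightarrow> complex \<Rightarrow> complex \<Rightarrow> bool"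
  assumes "A \<in> gen_group S"
    and one: "P 1 0 0 1"
    and base: "\<And>A. A \<in> S \<Longrightarrow> P (A$1$1) (A$1$2) (A$2$1) (A$2$2)"
    and dt: "\<And>p q r u. P p q r u \<Longrightarrow> p*u - q*r \<noteq> 0"
    and mult: "\<And>p q r u p' q' r' u'. P p q r u \<Longrightarrow> P p' q' r' u' \<Longrightarrow>
        P (p*p' + q*r') (p*q' + q*u') (r*p' + u*r') (r*q' + u*u')"
    and inv: "\<And>p q r u. P p q r u \<Longrightarrow>
        P (u/(p*u - q*r)) (-q/(p*u - q*r)) (-r/(p*u - q*r)) (p/(p*u - q*r))"
  shows "P (A$1$1) (A$1$2) (A$2$1) (A$2$2)"
  using assms(1)
proof (rule gen_group_inv_induct[where Q = "\<lambda>A. P (A$1$1) (A$1$2) (A$2$1) (A$2$2)"])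
  show "P ((mat 1::cmat2) $ 1 $ 1) ((mat 1::cmat2) $ 1 $ 2) ((mat 1::cmat2) $ 2 $ 1) ((mat 1::cmat2) $ 2 $ 2)"
    using one by (simp add: mat1_mk2)
  show "P (A $ 1 $ 1) (A $ 1 $ 2) (A $ 2 $ 1) (A $ 2 $ 2)" if "A \<in> S" for A :: cmat2 using base that .
  show "P ((A ** B) $ 1 $ 1) ((A ** B) $ 1 $ 2) ((A ** B) $ 2 $ 1) ((A ** B) $ 2 $ 2)"
    if "P (A $ 1 $ 1) (A $ 1 $ 2) (A $ 2 $ 1) (A $ 2 $ 2)" "P (B $ 1 $ 1) (B $ 1 $ 2) (B $ 2 $ 1) (B $ 2 $ 2)" for A B :: cmat2
  proof -
    have "A ** B = mk2 (A$1$1) (A$1$2) (A$2$1) (A$2$2) ** mk2 (B$1$1) (B$1$2) (B$2$1) (B$2$2)"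
      using mk2_ext[of A] mk2_ext[of B] by simp
    then show ?thesis using mult[OF that] by (simp add: mk2_mult)
  qed
  show "P (matrix_inv A $ 1 $ 1) (matrix_inv A $ 1 $ 2) (matrix_inv A $ 2 $ 1) (matrix_inv A $ 2 $ 2)"
    if "P (A $ 1 $ 1) (A $ 1 $ 2) (A $ 2 $ 1) (A $ 2 $ 2)" for A :: cmat2
  proof -
    let ?d = "A$1$1 * A$2$2 - A$1$2 * A$2$1"
    have "matrix_inv A = matrix_inv (mk2 (A$1$1) (A$1$2) (A$2$1) (A$2$2))" using mk2_ext[of A] by simp
    also have "\<dots> = mk2 (A$2$2/?d) (-A$1$2/?d) (-A$2$1/?d) (A$1$1/?d)"
      using dt[OF that] by (intro matrix_inv_mk2) auto
    finally show ?thesis using inv[OF that] by simp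
  qed
qed

lemma elem_upper:
  assumes S: "\<forall>A\<in>S. A$2$1 = 0 \<and> A$1$1 * A$2$2 \<noteq> 0"
  shows "elementary (gen_group S)"
proof -
  have Q: "A$2$1 = 0 \<and> A$1$1 * A$2$2 \<noteq> 0" if "A \<in> gen_group S" for A
    using that by (rule gen_group_mk2_induct[where P = "\<lambda>p q r u. r = 0 \<and> p * u \<noteq> 0"])
      (use S in auto)
  have "(\<lambda>A. act A Inf) ` gen_group S \<subseteq> {Inf}"
    using Q by (auto simp: Let_def)
  then have "finite ((\<lambda>A. act A Inf) ` gen_group S)" by (rule finite_subset) simp
  then show ?thesis unfolding elementary_def using Inf_in by blast
qed

lemma elem_eig:
  assumes S: "\<forall>A\<in>S. A$1$1 * A$2$2 - A$1$2 * A$2$1 \<noteq> 0 \<and> A$1$1 * z + A$1$2 = (A$2$1 * z + A$2$2) * z"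
  shows "elementary (gen_group S)"
proof -
  let ?P = "\<lambda>(p::complex) q r u. p*u - q*r \<noteq> 0 \<and> p*z + q = (r*z + u) * z"
  have Q: "?P (A$1$1) (A$1$2) (A$2$1) (A$2$2)" if "A \<in> gen_group S" for A
    using that
  proof (rule gen_group_mk2_induct[where P = ?P])
    show "?P 1 0 0 1" by simp
    show "?P (A$1$1) (A$1$2) (A$2$1) (A$2$2)" if "A \<in> S" for A using S that by blast
    show "p*u - q*r \<noteq> 0" if "?P p q r u" for p q r u using that by blast
    show "?P (p*p' + q*r') (p*q' + q*u') (r*p' + u*r') (r*q' + u*u')"
      if A: "?P p q r u" and B: "?P p' q' r' u'" for p q r u p' q' r' u'
    proof -
      have "(p*p' + q*r') * z + (p*q' + q*u') = p*(p'*z + q') + q*(r'*z + u')" by (simp add: algebra_simps)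
      also have "\<dots> = (r'*z + u') * (p*z + q)" using B by (simp add: algebra_simps)
      also have "\<dots> = ((r*p' + u*r') * z + (r*q' + u*u')) * z"
      proof -
        have "(r*p' + u*r') * z + (r*q' + u*u') = r*(p'*z + q') + u*(r'*z + u')" by (simp add: algebra_simps)
        also have "\<dots> = (r'*z + u') * (r*z + u)" using B by (simp add: algebra_simps)
        finally show ?thesis using A by simp
      qed
      finally show ?thesis using A B mk2_det_mult[of p p' q r' r q' u u'] by simp
    qed
    show "?P (u/(p*u - q*r)) (-q/(p*u - q*r)) (-r/(p*u - q*r)) (p/(p*u - q*r))"
      if A: "?P p q r u" for p q r u
    proof -
      define \<delta> where "\<delta> = p*u - q*r"
      define k where "k = r*z + u"
      have d0: "\<delta> \<noteq> 0" using A unfolding \<delta>_def by simp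
      have q': "q = k*z - p*z" and u': "u = k - r*z" using A unfolding k_def by (auto simp: algebra_simps)
      have dd: "\<delta> = k * (p - r*z)" unfolding \<delta>_def q' u' by (simp add: algebra_simps)
      have k0: "k \<noteq> 0" and pr: "p - r*z \<noteq> 0" using dd d0 by auto
      have uz: "u*z - q = z*(p - r*z)" unfolding q' u' by (simp add: algebra_simps)
      have "(u/\<delta>) * z + (-q/\<delta>) = (u*z - q)/\<delta>" using d0 by (simp add: field_simps)
      also have "\<dots> = (1/k) * z" unfolding uz dd using k0 pr by simp
      finally have e1: "(u/\<delta>) * z + (-q/\<delta>) = (1/k) * z" .
      have "(-r/\<delta>) * z + p/\<delta> = (p - r*z)/\<delta>" using d0 by (simp add: field_simps)
      also have "\<dots> = 1/k" unfolding dd using k0 pr by simp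
      finally have e2: "(-r/\<delta>) * z + p/\<delta> = 1/k" .
      have "(u/\<delta>) * (p/\<delta>) - (-q/\<delta>) * (-r/\<delta>) = 1/\<delta>"
        using d0 unfolding \<delta>_def by (simp add: divide_simps)
      then have dt: "(u/\<delta>) * (p/\<delta>) - (-q/\<delta>) * (-r/\<delta>) \<noteq> 0" using d0 by simp
      show ?thesis using e1 e2 dt unfolding \<delta>_def[symmetric] by simp
    qed
  qed
  have act_eq: "act A (Pt z 0) = Pt z 0" if "A \<in> gen_group S" for A
  proof -
    obtain p q r u where A: "A = mk2 p q r u" by (rule that[OF mk2_ext])
    note PA = Q[OF that, unfolded A mk2_nth]
    define k where "k = r*z + u"
    have k0: "k \<noteq> 0"
    proof
      assume "k = 0"
      then have "u = -r*z" "q = -p*z" using PA unfolding k_def by (auto simp: algebra_simps eq_neg_iff_add_eq_0)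
      then show False using PA by (simp add: algebra_simps)
    qed
    have D: "(cmod (r*z + u))\<^sup>2 + (cmod r)\<^sup>2 * 0\<^sup>2 \<noteq> 0" using k0 unfolding k_def by simp
    have "((p*z + q) * cnj (r*z + u) + p * cnj r * complex_of_real (0\<^sup>2)) / complex_of_real ((cmod (r*z + u))\<^sup>2 + (cmod r)\<^sup>2 * 0\<^sup>2) = z"
    proof -
      have kk: "(complex_of_real (cmod k))^2 = k * cnj k" by (metis complex_norm_square of_real_power)
      have "k * cnj k \<noteq> 0" using k0 by simp
      then show ?thesis using PA k0 unfolding k_def[symmetric] by (simp add: kk)
    qed
    then show ?thesis using A D by (simp add: Let_def)
  qed
  have "(\<lambda>A. act A (Pt z 0)) ` gen_group S \<subseteq> {Pt z 0}"
    using act_eq by auto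
  then have "finite ((\<lambda>A. act A (Pt z 0)) ` gen_group S)" by (rule finite_subset) simp
  then show ?thesis unfolding elementary_def using Pt0_in by blast
qed

lemma elem_dad:
  assumes S: "\<forall>A\<in>S. A$1$1 * A$2$2 - A$1$2 * A$2$1 \<noteq> 0 \<and> ((A$1$2 = 0 \<and> A$2$1 = 0) \<or> (A$1$1 = 0 \<and> A$2$2 = 0))"
  shows "elementary (gen_group S)"
proof -
  let ?P = "\<lambda>(p::complex) q r u. p*u - q*r \<noteq> 0 \<and> ((q = 0 \<and> r = 0) \<or> (p = 0 \<and> u = 0))"
  have Q: "?P (A$1$1) (A$1$2) (A$2$1) (A$2$2)" if "A \<in> gen_group S" for A
    using that
  proof (rule gen_group_mk2_induct[where P = ?P])
    show "?P 1 0 0 1" by simp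
    show "?P (A$1$1) (A$1$2) (A$2$1) (A$2$2)" if "A \<in> S" for A using S that by blast
    show "p*u - q*r \<noteq> 0" if "?P p q r u" for p q r u using that by blast
    show "?P (p*p' + q*r') (p*q' + q*u') (r*p' + u*r') (r*q' + u*u')"
      if A: "?P p q r u" and B: "?P p' q' r' u'" for p q r u p' q' r' u'
      using A B by auto
    show "?P (u/(p*u - q*r)) (-q/(p*u - q*r)) (-r/(p*u - q*r)) (p/(p*u - q*r))"
      if A: "?P p q r u" for p q r u
    proof -
      have d0: "p*u - q*r \<noteq> 0" using A by blast
      have "(u/(p*u - q*r)) * (p/(p*u - q*r)) - (-q/(p*u - q*r)) * (-r/(p*u - q*r)) = 1/(p*u - q*r)"
        using d0 by (simp add: divide_simps)
      then show ?thesis using A d0 by auto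
    qed
  qed
  have "act A Inf \<in> {Inf, Pt 0 0}" if "A \<in> gen_group S" for A
    using Q[OF that] by (auto simp: Let_def)
  then have "(\<lambda>A. act A Inf) ` gen_group S \<subseteq> {Inf, Pt 0 0}"
    by blast
  then have "finite ((\<lambda>A. act A Inf) ` gen_group S)" by (rule finite_subset) simp
  then show ?thesis unfolding elementary_def using Inf_in by blast
qed



lemma nsq_mult: "nsq (x*y) = nsq x * nsq y" by (simp add: nsq_def norm_mult power_mult_distrib)
lemma nsq_cnj[simp]: "nsq (cnj x) = nsq x" by (simp add: nsq_def)
lemma nsq_ofreal: "nsq (complex_of_real K) = K^2" by (simp add: nsq_def)
lemma nsq_div: "nsq (x/y) = nsq x / nsq y" by (simp add: nsq_def norm_divide power_divide)
lemma nsq_zero_iff[simp]: "nsq x = 0 \<longleftrightarrow> x = 0" by (simp add: nsq_def)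

lemma mk2_diff: "mk2 a b c d - mk2 a' b' c' d' = mk2 (a - a') (b - b') (c - c') (d - d')"
  by (simp add: vec_eq_iff forall_2)

lemma jorg:
  fixes K :: real
  assumes ll: "l * cnj l = 1" and lne: "l \<noteq> cnj l"
    and det: "a*d - b*c = 1" and K: "K > 0"
    and r1: "nsq (l - cnj l) * (nsq a + nsq (b / complex_of_real K) + nsq (c * complex_of_real K) + nsq d + 2) / 4 < 1"
    and disc: "discrete_group (gen_group {mk2 l 0 0 (cnj l), mk2 a b c d})"
  shows "elementary (gen_group {mk2 l 0 0 (cnj l), mk2 a b c d})"
proof -
  define g where "g = mk2 l 0 0 (cnj l)"
  define G where "G = gen_group {g, mk2 a b c d}"
  define kc where "kc = complex_of_real K"
  have kc0: "kc \<noteq> 0" using K unfolding kc_def by simp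
  have l0: "l \<noteq> 0" using ll by auto
  define x where "x = (a, b/kc, c*kc, d)"
  have detx: "a*d - (b/kc)*(c*kc) = 1" using det kc0 by simp
  define A where "A = jA l x" define B where "B = jB l x"
  define C where "C = jC l x" define D where "D = jD l x"
  have dn: "A n * D n - B n * C n = 1" for n
    unfolding A_def B_def C_def D_def x_def using jdet[OF detx ll] .
  have suc: "A (Suc n) = A n * D n * l - B n * C n * cnj l"
     "B (Suc n) = A n * B n * (cnj l - l)"
     "C (Suc n) = C n * D n * (l - cnj l)"
     "D (Suc n) = A n * D n * cnj l - B n * C n * l" for n
    unfolding A_def B_def C_def D_def by (simp_all add: jSuc)
  have zero: "A 0 = a" "B 0 = b/kc" "C 0 = c*kc" "D 0 = d"
    unfolding A_def B_def C_def D_def x_def by (simp_all add: j0)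
  define H where "H n = mk2 (A n) (kc * B n) (C n / kc) (D n)" for n
  have H0: "H 0 = mk2 a b c d" unfolding H_def zero using kc0 by simp
  have Hsuc: "H (Suc n) = H n ** g ** matrix_inv (H n)" for n
  proof -
    have "matrix_inv (H n) = mk2 (D n / 1) (-(kc * B n) / 1) (-(C n / kc) / 1) (A n / 1)"
      unfolding H_def using dn[of n] kc0 by (intro matrix_inv_mk2) auto
    then show ?thesis unfolding H_def g_def suc
      using kc0 by (simp add: mk2_mult mk2_eq_iff field_simps)
  qed
  have HG: "H n \<in> G" for n
  proof (induct n)
    case 0 show ?case unfolding H0 G_def by (rule gen_base) simp
  next
    case (Suc n)
    have gG: "g \<in> G" unfolding G_def by (rule gen_base) simp
    show ?case unfolding Hsuc using Suc gG unfolding G_def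
      by (blast intro: gen_mult gen_inv)
  qed
  have gi: "matrix_inv g = mk2 (cnj l / 1) (-0/1) (-0/1) (l/1)"
    unfolding g_def using ll by (intro matrix_inv_mk2) (auto simp: mult.commute)
  have giG: "matrix_inv g \<in> G" unfolding G_def by (rule gen_inv, rule gen_base) (simp add: g_def)
  obtain e where e0: "e > 0" and eprop: "\<forall>X\<in>G. norm (X - mat 1) < e \<longrightarrow> X = mat 1"
    using disc unfolding discrete_group_def G_def g_def by blast
  define W where "W = 1 + K^2 + 1/K^2"
  have W1: "1 \<le> W" unfolding W_def by simp
  have "\<exists>n. nsq (A n - l) + nsq (B n) + nsq (C n) + nsq (D n - cnj l) < e^2 / W"
    unfolding A_def B_def C_def D_def x_def
    using jconv[OF detx ll _, of "e^2/W"] r1 e0 W1 unfolding kc_def by simp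
  then obtain n where En: "nsq (A n - l) + nsq (B n) + nsq (C n) + nsq (D n - cnj l) < e^2 / W" by blast
  have eqm: "H n ** matrix_inv g - mat 1 = mk2 (A n * cnj l - 1) (kc * B n * l) (C n / kc * cnj l) (D n * l - 1)"
    unfolding H_def gi mat1_mk2 by (simp add: mk2_mult mk2_diff)
  have nl: "nsq l = 1" using ll nsq_c[of l] by (metis of_real_eq_1_iff)
  have n1: "nsq (A n * cnj l - 1) = nsq (A n - l)"
  proof -
    have "A n * cnj l - 1 = cnj l * (A n - l)" using ll by (simp add: algebra_simps)
    then show ?thesis using nl by (simp add: nsq_mult)
  qed
  have n4: "nsq (D n * l - 1) = nsq (D n - cnj l)"
  proof -
    have "D n * l - 1 = l * (D n - cnj l)" using ll by (simp add: algebra_simps)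
    then show ?thesis using nl by (simp add: nsq_mult)
  qed
  have n2: "nsq (kc * B n * l) = K^2 * nsq (B n)" using nl by (simp add: nsq_mult kc_def nsq_ofreal)
  have n3: "nsq (C n / kc * cnj l) = nsq (C n) / K^2" using nl by (simp add: nsq_mult nsq_div kc_def nsq_ofreal)
  have "(norm (H n ** matrix_inv g - mat 1))^2 =
      nsq (A n * cnj l - 1) + nsq (kc * B n * l) + nsq (C n / kc * cnj l) + nsq (D n * l - 1)"
    unfolding eqm norm_mk2 nsq_def by simp
  then have nrm: "(norm (H n ** matrix_inv g - mat 1))^2 =
      nsq (A n - l) + K^2 * nsq (B n) + nsq (C n) / K^2 + nsq (D n - cnj l)"
    unfolding n1 n2 n3 n4 .
  have "nsq (A n - l) + K^2 * nsq (B n) + nsq (C n) / K^2 + nsq (D n - cnj l)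
      \<le> W * (nsq (A n - l) + nsq (B n) + nsq (C n) + nsq (D n - cnj l))"
  proof -
    have a1: "nsq (A n - l) \<le> W * nsq (A n - l)" using W1 mult_right_mono[OF W1 nsq_ge0[of "A n - l"]] by simp
    have a2: "nsq (D n - cnj l) \<le> W * nsq (D n - cnj l)" using W1 mult_right_mono[OF W1 nsq_ge0[of "D n - cnj l"]] by simp
    have a3: "K^2 * nsq (B n) \<le> W * nsq (B n)" unfolding W_def
      by (intro mult_right_mono) (auto simp: add_increasing)
    have a4: "nsq (C n) / K^2 \<le> W * nsq (C n)"
    proof -
      have "nsq (C n) / K^2 = (1/K^2) * nsq (C n)" by simp
      also have "\<dots> \<le> W * nsq (C n)" unfolding W_def
        by (intro mult_right_mono) (auto simp: add_increasing)
      finally show ?thesis .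
    qed
    show ?thesis using a1 a2 a3 a4 by (simp add: algebra_simps)
  qed
  also have "\<dots> < W * (e^2 / W)" using En W1 by (intro mult_strict_left_mono) auto
  also have "\<dots> = e^2" using W1 by simp
  finally have "(norm (H n ** matrix_inv g - mat 1))^2 < e^2" using nrm by simp
  then have "norm (H n ** matrix_inv g - mat 1) < e" using e0 by (simp add: power_less_imp_less_base)
  moreover have "H n ** matrix_inv g \<in> G" using HG[of n] giG unfolding G_def by (blast intro: gen_mult)
  ultimately have "H n ** matrix_inv g = mat 1" using eprop by blast
  then have Bn: "B n = 0" and Cn: "C n = 0"
    unfolding H_def gi mat1_mk2 using kc0 l0 by (simp_all add: mk2_mult mk2_eq_iff)
  define \<beta> where "\<beta> m = B m * C m" for m
  define s where "s = nsq (l - cnj l)"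
  have s0: "s \<noteq> 0" using lne unfolding s_def by simp
  have bsuc: "\<beta> (Suc m) = complex_of_real s * \<beta> m * (1 + \<beta> m)" for m
    unfolding \<beta>_def suc s_def using id_beta[OF dn[of m]] by simp
  have ad: "A m * D m = 1 + \<beta> m" for m using dn[of m] unfolding \<beta>_def by (simp add: algebra_simps)
  define M where "M = (LEAST m. \<beta> m = 0)"
  have bn: "\<beta> n = 0" unfolding \<beta>_def using Bn by simp
  have bM: "\<beta> M = 0" unfolding M_def using bn by (rule LeastI)
  have Mn: "M \<le> n" unfolding M_def using bn by (rule Least_le)
  have after: "\<beta> (M + j) = 0" for j
    by (induct j) (simp_all add: bM bsuc)
  have AD1: "A m \<noteq> 0 \<and> D m \<noteq> 0" if "M \<le> m" for m
  proof -
    have "\<beta> m = 0" using after[of "m - M"] that by simp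
    then have "A m * D m = 1" using ad[of m] by simp
    then show ?thesis by auto
  qed
  have lcl: "cnj l - l \<noteq> 0" "l - cnj l \<noteq> 0" using lne by auto
  have bkw: "B (n - j) = 0 \<and> C (n - j) = 0" if "j \<le> n - M" for j
    using that
  proof (induct j)
    case 0 then show ?case using Bn Cn by simp
  next
    case (Suc j)
    define m where "m = n - Suc j"
    have mM: "M \<le> m" and sm: "Suc m = n - j" using Suc.prems unfolding m_def by auto
    have "B (Suc m) = 0 \<and> C (Suc m) = 0" using Suc sm by simp
    then have "A m * B m * (cnj l - l) = 0" "C m * D m * (l - cnj l) = 0" unfolding suc by auto
    then show ?case using AD1[OF mM] lcl unfolding m_def[symmetric] by auto
  qed
  have BM: "B M = 0" and CM: "C M = 0" using bkw[of "n - M"] Mn by simp_all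
  have gS: "g $ 1 $ 1 * g $ 2 $ 2 - g $ 1 $ 2 * g $ 2 $ 1 = 1" unfolding g_def using ll by simp
  show ?thesis
  proof (cases M)
    case 0
    then have "\<beta> 0 = 0" using bM by simp
    then have "b / kc * (c * kc) = 0" unfolding \<beta>_def zero .
    then have "b = 0 \<or> c = 0" using kc0 by simp
    then show ?thesis
    proof
      assume "b = 0"
      have "elementary (gen_group {g, mk2 a b c d})"
        by (rule elem_eig[where z = 0]) (use \<open>b = 0\<close> det gS in \<open>auto simp: g_def\<close>)
      then show ?thesis unfolding g_def .
    next
      assume "c = 0"
      have "elementary (gen_group {g, mk2 a b c d})"
        by (rule elem_upper) (use \<open>c = 0\<close> det ll in \<open>auto simp: g_def\<close>)
      then show ?thesis unfolding g_def .
    qed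
  next
    case (Suc m)
    have bm: "\<beta> m \<noteq> 0" unfolding M_def using not_less_Least[of m "\<lambda>m. \<beta> m = 0"] Suc M_def by auto
    have "complex_of_real s * \<beta> m * (1 + \<beta> m) = 0" using bM bsuc[of m] Suc by simp
    then have "1 + \<beta> m = 0" using bm s0 by simp
    then have "A m * D m = 0" using ad[of m] by simp
    have "B m \<noteq> 0" "C m \<noteq> 0" using bm unfolding \<beta>_def by auto
    moreover have "A m * B m * (cnj l - l) = 0" "C m * D m * (l - cnj l) = 0"
      using BM CM Suc unfolding suc[symmetric] by auto
    ultimately have Am: "A m = 0" and Dm: "D m = 0" using lcl by auto
    show ?thesis
    proof (cases m)
      case 0
      then have "a = 0" "d = 0" using Am Dm zero by auto
      have "elementary (gen_group {g, mk2 a b c d})"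
        by (rule elem_dad) (use \<open>a = 0\<close> \<open>d = 0\<close> det gS in \<open>auto simp: g_def\<close>)
      then show ?thesis unfolding g_def .
    next
      case (Suc m')
      have "A m + D m = (A m' * D m' - B m' * C m') * (l + cnj l)"
        unfolding Suc suc by (simp add: algebra_simps)
      then have "l + cnj l = 0" using Am Dm dn[of m'] by simp
      then have "l - cnj l = 2 * l" by (simp add: algebra_simps eq_neg_iff_add_eq_0)
      then have "s = nsq 2 * nsq l" unfolding s_def by (simp only: nsq_mult)
      then have s4: "s = 4" using nl by (simp add: nsq_def)
      have "2 \<le> nsq a + nsq (b/kc) + nsq (c*kc) + nsq d" using S_ge2[OF detx] .
      then show ?thesis using r1 s4 unfolding s_def kc_def by simp
    qed
  qed
qed



lemma fthm_ge:
  assumes t: "cmod t < 1" and det: "a*d - b*c = 1"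
  shows "(nsq a + nsq (b / complex_of_real (cmod (1+t) / cmod (1-t))) + nsq (c * complex_of_real (cmod (1+t) / cmod (1-t))) + nsq d + 2) / 4
     \<le> fthm a b c d t"
proof -
  define p where "p = nsq (1 - t)"
  define q where "q = nsq (1 + t)"
  define w where "w = (1 - (cmod t)^2)^2"
  have t1: "t \<noteq> 1" "t \<noteq> -1" using t by auto
  have p0: "p > 0" unfolding p_def using t1 by (simp add: nsq_def)
  have q0: "q > 0" unfolding q_def using t1 by (simp add: nsq_def add_eq_0_iff)
  have ct: "(cmod t)^2 < 1" using t by (simp add: abs_square_less_1)
  have w0: "w > 0" unfolding w_def using ct by simp
  have e1: "(cmod (1 - t^2))^2 = p * q"
  proof -
    have "1 - t^2 = (1 - t) * (1 + t)" by (simp add: algebra_simps power2_eq_square)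
    then show ?thesis unfolding p_def q_def nsq_def by (simp add: norm_mult power_mult_distrib)
  qed
  have e2: "(cmod (1 + t))^4 = q^2" unfolding q_def nsq_def by (simp flip: power_mult)
  have e3: "(cmod (1 - t))^4 = p^2" unfolding p_def nsq_def by (simp flip: power_mult)
  have e4: "Re ((cnj t - t)^2) = w - p * q"
    unfolding w_def p_def q_def nsq_def cmod_power2
    by (simp add: power2_eq_square algebra_simps)
  have pqw: "w \<le> p * q"
  proof -
    have "1 - (cmod t)^2 \<le> cmod (1 - t^2)"
      using norm_triangle_ineq2[of 1 "t^2"] by (simp add: norm_power)
    moreover have "0 \<le> 1 - (cmod t)^2" using ct by simp
    ultimately have "(1 - (cmod t)^2)^2 \<le> (cmod (1 - t^2))^2" by (rule power_mono)
    then show ?thesis unfolding w_def e1 .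
  qed
  define K where "K = cmod (1+t) / cmod (1-t)"
  have K2: "K^2 = q / p" unfolding K_def p_def q_def nsq_def by (simp add: power_divide)
  have Kne: "K \<noteq> 0" unfolding K_def using t1 by (simp add: add_eq_0_iff)
  define S0 where "S0 = nsq a + nsq (b / complex_of_real K) + nsq (c * complex_of_real K) + nsq d"
  have S0': "S0 = nsq a + nsq b * (p / q) + nsq c * (q / p) + nsq d"
    unfolding S0_def using K2 p0 q0 by (simp add: nsq_div nsq_mult nsq_ofreal)
  have S02: "2 \<le> S0" unfolding S0_def using S_ge2[of a d "b / complex_of_real K" "c * complex_of_real K"] det Kne by simp
  define X where "X = p * q * (nsq a + nsq d) + q^2 * nsq c + p^2 * nsq b"
  have X: "p * q * (S0 - 2) = X - 2 * (p * q)"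
  proof -
    have "p * q * (nsq b * (p / q)) = p^2 * nsq b" using q0 by (simp add: power2_eq_square)
    moreover have "p * q * (nsq c * (q / p)) = q^2 * nsq c" using p0 by (simp add: power2_eq_square)
    ultimately show ?thesis unfolding S0' X_def by (simp add: algebra_simps)
  qed
  have f0: "fthm a b c d t = (X + 2 * (w - p * q)) / (4 * w) + 1/2"
    by (simp only: fthm_def e1 e2 e3 e4 X_def w_def nsq_def)
  have f: "fthm a b c d t = p * q * (S0 - 2) / (4 * w) + 1"
    unfolding f0 X using w0 by (simp add: field_simps)
  have "(S0 + 2) / 4 = (S0 - 2) / 4 + 1" by (simp add: field_simps)
  also have "(S0 - 2) / 4 \<le> p * q * (S0 - 2) / (4 * w)"
  proof -
    have "(S0 - 2) * w \<le> (S0 - 2) * (p * q)" using S02 pqw by (intro mult_left_mono) auto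
    then show ?thesis using w0 by (simp add: field_simps)
  qed
  finally show ?thesis unfolding f S0_def K_def by simp
qed



theorem theorem1p2:
  fixes \<theta> :: real and a b c d :: complex
  assumes "mk2 a b c d \<in> SL2C"
    and "discrete_group (gen_group {mk2 (exp (\<i> * \<theta>)) 0 0 (exp (- \<i> * \<theta>)), mk2 a b c d})"
    and "\<not> elementary (gen_group {mk2 (exp (\<i> * \<theta>)) 0 0 (exp (- \<i> * \<theta>)), mk2 a b c d})"
  shows "(INF t\<in>{t. cmod t < 1}. 4 * fthm a b c d t * (sin \<theta>)\<^sup>2) \<ge> 1"
proof -
  define l where "l = exp (\<i> * complex_of_real \<theta>)"
  have cl: "cnj l = exp (- \<i> * complex_of_real \<theta>)" unfolding l_def by (simp add: exp_cnj)
  have ll: "l * cnj l = 1" unfolding cl unfolding l_def by (simp add: exp_add[symmetric])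
  have det: "a*d - b*c = 1" using assms(1) by (simp add: SL2C_def det_mk2)
  have Rel: "Re l = cos \<theta>" "Im l = sin \<theta>" unfolding l_def by (simp_all add: Re_exp Im_exp)
  have s_eq: "nsq (l - cnj l) = 4 * (sin \<theta>)^2"
    unfolding nsq_def cmod_power2 using Rel by (simp add: power2_eq_square)
  have disc: "discrete_group (gen_group {mk2 l 0 0 (cnj l), mk2 a b c d})"
    using assms(2) unfolding cl unfolding l_def .
  have nel: "\<not> elementary (gen_group {mk2 l 0 0 (cnj l), mk2 a b c d})"
    using assms(3) unfolding cl unfolding l_def .
  have key: "1 \<le> 4 * fthm a b c d t * (sin \<theta>)\<^sup>2" if t: "cmod t < 1" for t
  proof (rule ccontr)
    assume neg: "\<not> 1 \<le> 4 * fthm a b c d t * (sin \<theta>)\<^sup>2"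
    show False
    proof (cases "sin \<theta> = 0")
      case True
      then have lc: "cnj l = l" using Rel by (simp add: complex_eq_iff)
      show False
      proof (cases "c = 0")
        case True
        have "elementary (gen_group {mk2 l 0 0 (cnj l), mk2 a b c d})"
          by (rule elem_upper) (use True det ll in auto)
        then show False using nel by simp
      next
        case False
        define w where "w = csqrt ((a - d)^2 + 4*b*c)"
        define z where "z = ((a - d) + w) / (2*c)"
        have hz: "2*c*z = (a - d) + w" unfolding z_def using False by simp
        have "(2*c*z - (a - d))^2 = (a - d)^2 + 4*b*c" unfolding hz w_def by simp
        then have "4*c*(c*z^2 - (a - d)*z - b) = 0" by algebra
        then have "c*z^2 - (a - d)*z - b = 0" using False by simp
        then have root: "a*z + b = (c*z + d)*z" by (simp add: algebra_simps power2_eq_square)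
        have "elementary (gen_group {mk2 l 0 0 (cnj l), mk2 a b c d})"
          by (rule elem_eig[where z = z]) (use root det ll lc in auto)
        then show False using nel by simp
      qed
    next
      case False
      have lne: "l \<noteq> cnj l"
      proof
        assume "l = cnj l"
        then have "nsq (l - cnj l) = 0" by simp
        then show False using s_eq False by simp
      qed
      define K where "K = cmod (1+t) / cmod (1-t)"
      have t1: "t \<noteq> 1" "t \<noteq> -1" using t by auto
      have "1 + t \<noteq> 0" "1 - t \<noteq> 0" using t1 by (auto simp: add_eq_0_iff)
      then have Kp: "K > 0" unfolding K_def by simp
      have fge: "(nsq a + nsq (b / complex_of_real K) + nsq (c * complex_of_real K) + nsq d + 2) / 4
          \<le> fthm a b c d t" unfolding K_def by (rule fthm_ge[OF t det])
      have "nsq (l - cnj l) * (nsq a + nsq (b / complex_of_real K) + nsq (c * complex_of_real K) + nsq d + 2) / 4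
          \<le> nsq (l - cnj l) * fthm a b c d t"
        using mult_left_mono[OF fge nsq_ge0[of "l - cnj l"]] by simp
      also have "\<dots> < 1" using neg s_eq by (simp add: mult_ac)
      finally have r1: "nsq (l - cnj l) * (nsq a + nsq (b / complex_of_real K) + nsq (c * complex_of_real K) + nsq d + 2) / 4 < 1" .
      have "elementary (gen_group {mk2 l 0 0 (cnj l), mk2 a b c d})"
        by (rule jorg[OF ll lne det Kp r1 disc])
      then show False using nel by simp
    qed
  qed
  have ne: "{t. cmod t < 1} \<noteq> {}"
  proof -
    have "(0::complex) \<in> {t. cmod t < 1}" by simp
    then show ?thesis by blast
  qed
  show ?thesis
    by (rule cINF_greatest[OF ne]) (use key in auto)
qed

end
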